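(* For every integer $n\ge 0$, $$\sum_{j,k}\genfrac{\{}{\}}{0pt}{}{n}{k}\genfrac{[}{]}{0pt}{}{k}{j}\binom{n}{j}(-1)^k=(-1)^n .$$
   Context: Here $\genfrac{[}{]}{0pt}{}{n}{k}$ denotes the unsigned (absolute) Stirling number of the first kind and $\genfrac{\{}{\}}{0pt}{}{n}{k}$ the ordinary Stirling number of the second kind (Knuth's notation), with $\genfrac{[}{]}{0pt}{}{0}{0}=\genfrac{\{}{\}}{0pt}{}{0}{0}=1$, $\genfrac{[}{]}{0pt}{}{n}{0}=\genfrac{\{}{\}}{0pt}{}{n}{0}=0$ for $n>0$, and $\genfrac{[}{]}{0pt}{}{n}{k}=\genfrac{\{}{\}}{0pt}{}{n}{k}=0$ for $0\le n<k$. The double sum is over all integers $j,k$ with $0\le j\le k\le n$. *)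

theory Defs
  imports "HOL-Combinatorics.Stirling"
begin

end

theory Submission
  imports Defs
begin

definition gg :: "nat \<Rightarrow> nat \<Rightarrow> int" where
  "gg n j = (\<Sum>k\<le>n. int (Stirling n k) * int (stirling k j) * (-1) ^ k)"

lemma shiftA:
  "(\<Sum>k\<le>n. int (Suc k) * int (Stirling n (Suc k)) * int (stirling (Suc k) j) * (-1) ^ Suc k)
   = (\<Sum>k\<le>n. int k * int (Stirling n k) * int (stirling k j) * (-1) ^ k)"
proof -
  have "(\<Sum>k\<le>n. int (Suc k) * int (Stirling n (Suc k)) * int (stirling (Suc k) j) * (-1) ^ Suc k)
     = (\<Sum>k\<le>Suc n. int k * int (Stirling n k) * int (stirling k j) * (-1) ^ k)"
    by (subst sum.atMost_Suc_shift) simp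
  also have "\<dots> = (\<Sum>k\<le>n. int k * int (Stirling n k) * int (stirling k j) * (-1) ^ k)"
    by simp
  finally show ?thesis .
qed

lemma gg_Suc:
  "gg (Suc n) j = (if j = 0 then 0 else - gg n (j - 1))"
proof -
  have "gg (Suc n) j = (\<Sum>k\<le>n. int (Stirling (Suc n) (Suc k)) * int (stirling (Suc k) j) * (-1) ^ Suc k)"
    unfolding gg_def by (subst sum.atMost_Suc_shift) simp
  also have "\<dots> = (\<Sum>k\<le>n. int (Suc k) * int (Stirling n (Suc k)) * int (stirling (Suc k) j) * (-1) ^ Suc k)
      + (\<Sum>k\<le>n. int (Stirling n k) * int (stirling (Suc k) j) * (-1) ^ Suc k)"
    by (simp add: sum.distrib[symmetric] algebra_simps)
  also have "\<dots> = (\<Sum>k\<le>n. int k * int (Stirling n k) * int (stirling k j) * (-1) ^ k)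
      + (\<Sum>k\<le>n. int (Stirling n k) * int (stirling (Suc k) j) * (-1) ^ Suc k)"
    by (simp only: shiftA)
  also have "\<dots> = (if j = 0 then 0 else - gg n (j - 1))"
  proof (cases j)
    case 0
    have "(\<Sum>k\<le>n. int k * int (Stirling n k) * int (stirling k 0) * (-1) ^ k) = 0"
      by (intro sum.neutral) (auto simp: stirling_0)
    then show ?thesis using 0 by simp
  next
    case (Suc j')
    have "(\<Sum>k\<le>n. int (Stirling n k) * int (stirling (Suc k) j) * (-1) ^ Suc k)
       = - (\<Sum>k\<le>n. int k * int (Stirling n k) * int (stirling k j) * (-1) ^ k) - gg n j'"
      unfolding gg_def Suc
      by (simp add: sum.distrib[symmetric] sum_negf[symmetric] algebra_simps)
    then show ?thesis using Suc by simp
  qed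
  finally show ?thesis .
qed

lemma gg_val: "gg n j = (if j = n then (-1) ^ n else 0)"
proof (induction n arbitrary: j)
  case 0
  then show ?case by (cases j) (auto simp: gg_def)
next
  case (Suc n)
  then show ?case by (cases j) (auto simp: gg_Suc)
qed

theorem mainTheorem3:
  fixes n :: nat
  shows "(\<Sum>k\<le>n. \<Sum>j\<le>k. int (Stirling n k) * int (stirling k j) * int (n choose j) * (-1) ^ k)
         = (-1) ^ n"
proof -
  have "(\<Sum>k\<le>n. \<Sum>j\<le>k. int (Stirling n k) * int (stirling k j) * int (n choose j) * (-1) ^ k)
      = (\<Sum>k\<le>n. \<Sum>j\<le>n. int (Stirling n k) * int (stirling k j) * int (n choose j) * (-1) ^ k)"
  proof (rule sum.cong[OF refl])
    fix k assume "k \<in> {..n}"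
    then have U: "{..n} = {..k} \<union> {k<..n}" by auto
    moreover have "(\<Sum>j\<in>{k<..n}. int (Stirling n k) * int (stirling k j) * int (n choose j) * (-1) ^ k) = 0"
      by (intro sum.neutral) auto
    then show "(\<Sum>j\<le>k. int (Stirling n k) * int (stirling k j) * int (n choose j) * (-1) ^ k)
      = (\<Sum>j\<le>n. int (Stirling n k) * int (stirling k j) * int (n choose j) * (-1) ^ k)"
      unfolding U by (subst sum.union_disjoint) auto
  qed
  also have "\<dots> = (\<Sum>j\<le>n. int (n choose j) * gg n j)"
    unfolding gg_def by (subst sum.swap) (simp add: sum_distrib_left algebra_simps)
  also have "\<dots> = (-1) ^ n"
    by (simp add: gg_val if_distrib[of "\<lambda>x. _ * x"] sum.delta' cong: if_cong)
  finally show ?thesis .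
qed

end
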